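(* The function $K_2$ is continuous on $\big([0,1]\times[0,1]\big)\setminus\{(0,0)\}$.
   Context: Let $K:[0,1]\times[0,1]\to\mathbb R$ be defined by $K(x,y)=\frac12-\{(xy)^{-1}\}$ if $0<x,y\le 1$, and $K(x,y)=0$ if $0\le x,y\le1$ and $xy=0$, where $\{\alpha\}=\alpha-\lfloor\alpha\rfloor$. Define $K_2(x,y)=\int_0^1K(x,z)K(z,y)\,dz$ for $0\le x,y\le1$. *)

theory Defs
  imports "HOL-Analysis.Analysis"
begin

definition K :: "real \<Rightarrow> real \<Rightarrow> real" where
  "K x y = (if x * y = 0 then 0 else 1/2 - frac (1 / (x * y)))"

definition K2 :: "real \<Rightarrow> real \<Rightarrow> real" where
  "K2 x y = integral {0..1} (\<lambda>z. K x z * K z y)"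

end

theory Submission
  imports Defs "HOL-Analysis.Analysis"
begin

definition Pf :: "real \<Rightarrow> real" where "Pf u = frac u * (1 - frac u) / 2"

lemma Pf_bounds: "0 \<le> Pf u" "Pf u \<le> 1/8"
proof -
  have f: "0 \<le> frac u" "frac u < 1" by (auto simp: frac_lt_1)
  show "0 \<le> Pf u" unfolding Pf_def using f by auto
  have "0 \<le> (frac u - 1/2)^2" by simp
  then show "Pf u \<le> 1/8" unfolding Pf_def by (simp add: power2_eq_square algebra_simps)
qed

lemma frac_deriv: "u \<notin> \<int> \<Longrightarrow> (frac has_real_derivative 1) (at u)"
proof -
  assume u: "u \<notin> \<int>"
  have "((\<lambda>x. x - real_of_int \<lfloor>x\<rfloor>) has_real_derivative 1 - 0) (at u)"
    by (intro derivative_intros floor_has_real_derivative[where f=id, simplified] u)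
  then show ?thesis by (simp add: frac_def[abs_def])
qed

lemma Pf_deriv: "u \<notin> \<int> \<Longrightarrow> (Pf has_real_derivative (1/2 - frac u)) (at u)"
proof -
  assume u: "u \<notin> \<int>"
  have "((\<lambda>x. frac x * (1 - frac x)) has_real_derivative
         (1 * (1 - frac u) + frac u * (0 - 1))) (at u)"
    by (rule DERIV_cong[OF DERIV_mult[OF frac_deriv[OF u] DERIV_diff[OF DERIV_const frac_deriv[OF u]]]]) (simp add: algebra_simps)
  from DERIV_cdivide[OF this, of 2]
  have "((\<lambda>x. frac x * (1 - frac x) / 2) has_real_derivative
         (1 * (1 - frac u) + frac u * (0 - 1)) / 2) (at u)" .
  then show ?thesis unfolding Pf_def[abs_def] by (rule DERIV_cong) (simp add: field_simps)
qed

lemma Pf_cont: "isCont Pf u"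
proof (cases "u \<in> \<int>")
  case False
  then show ?thesis using Pf_deriv DERIV_isCont by blast
next
  case True
  then obtain m where m: "u = of_int m" by (auto elim: Ints_cases)
  have ev: "eventually (\<lambda>v. Pf v = \<bar>v - u\<bar> * (1 - \<bar>v - u\<bar>) / 2) (nhds u)"
  proof -
    have "eventually (\<lambda>v. v \<in> ball u 1) (nhds u)" by (intro eventually_nhds_in_open) auto
    then show ?thesis
    proof (rule eventually_mono)
      fix v assume "v \<in> ball u 1"
      then have d: "\<bar>v - u\<bar> < 1" by (auto simp: dist_real_def)
      show "Pf v = \<bar>v - u\<bar> * (1 - \<bar>v - u\<bar>) / 2"
      proof (cases "v \<ge> u")
        case True
        then have "\<lfloor>v\<rfloor> = m" using d m by (intro floor_unique) auto
        then show ?thesis using True m by (simp add: Pf_def frac_def)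
      next
        case False
        then have "\<lfloor>v\<rfloor> = m - 1" using d m by (intro floor_unique) auto
        then have fv: "frac v = v - u + 1" using m by (simp add: frac_def)
        have ab: "\<bar>v - u\<bar> = u - v" using False by simp
        show ?thesis unfolding Pf_def fv ab by (simp add: algebra_simps)
      qed
    qed
  qed
  have "isCont (\<lambda>v. \<bar>v - u\<bar> * (1 - \<bar>v - u\<bar>) / (2::real)) u" by (intro continuous_intros) auto
  then show ?thesis using isCont_cong[OF ev] by simp
qed

lemma countable_negligible: "countable (S::real set) \<Longrightarrow> negligible S"
  using negligible_countable_Union[of "(\<lambda>x. {x}) ` S"] by auto

lemma K_pos: "x * z \<noteq> 0 \<Longrightarrow> K x z = 1/2 - frac (1/(x*z))"
  by (simp add: K_def)

lemma W_deriv: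
  fixes x a z :: real
  assumes x: "x > 0" and a: "0 < a" and z: "a < z" "z < 1" and nz: "1/(x*z) \<notin> \<int>"
  and qc: "continuous_on {a..1} q" and qdef: "q z = z * Pf (1/(x*z))"
  shows "((\<lambda>z. x*a^2*Pf(1/(x*a)) - x*(z^2*Pf(1/(x*z))) + 2*x*integral {a..z} q)
           has_real_derivative K x z) (at z)"
proof -
  have zp: "z > 0" using a z by simp
  have d0: "((\<lambda>z. 1/(x*z)) has_real_derivative -(1/(x*z^2))) (at z)"
    using x zp by (auto intro!: derivative_eq_intros simp: power2_eq_square field_simps)
  have d1: "((\<lambda>z. Pf (1/(x*z))) has_real_derivative (1/2 - frac (1/(x*z))) * (-(1/(x*z^2)))) (at z)"
    by (rule DERIV_chain2[OF Pf_deriv[OF nz] d0])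
  have d2: "((\<lambda>z. integral {a..z} q) has_real_derivative q z) (at z)"
    using integral_has_real_derivative[OF qc, of z] z at_within_Icc_at[of a z 1] by simp
  have dp: "((\<lambda>z. z^2) has_real_derivative 2*z) (at z)"
    by (auto intro!: derivative_eq_intros)
  have d3: "((\<lambda>z. z^2 * Pf(1/(x*z))) has_real_derivative
      (2*z*Pf(1/(x*z)) + z^2*((1/2 - frac (1/(x*z))) * (-(1/(x*z^2)))))) (at z)"
    by (rule DERIV_cong[OF DERIV_mult[OF dp d1]]) (simp add: algebra_simps)
  have "((\<lambda>z. x*a^2*Pf(1/(x*a)) - x*(z^2*Pf(1/(x*z))) + 2*x*integral {a..z} q)
           has_real_derivative 0 - x*(2*z*Pf(1/(x*z)) + z^2*((1/2 - frac (1/(x*z))) * (-(1/(x*z^2))))) + 2*x*q z) (at z)"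
    by (intro DERIV_add DERIV_diff DERIV_const DERIV_cmult d3 d2)
  then show ?thesis
    by (rule DERIV_cong) (use x zp in \<open>simp add: K_pos qdef power2_eq_square field_simps\<close>)
qed

lemma intC:
  fixes f :: "real \<Rightarrow> real"
  assumes E: "countable E" and c: "continuous_on ({a..b} - E) f"
    and bd: "\<And>z. z \<in> {a..b} \<Longrightarrow> \<bar>f z\<bar> \<le> B"
  shows "f integrable_on {a..b}" "f \<in> borel_measurable (lebesgue_on {a..b})"
proof -
  have nE: "negligible E" using countable_negligible E by blast
  have S: "{a..b} - E \<in> sets lebesgue"
    using nE by (metis negligible_imp_sets sets.Diff lmeasurable_cbox box_real(2) fmeasurableD)
  have "f \<in> borel_measurable (lebesgue_on ({a..b} - E))"
    by (rule continuous_imp_measurable_on_sets_lebesgue[OF c S])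
  then have "f measurable_on ({a..b} - E)" using measurable_on_iff_borel_measurable[OF S] by blast
  then have "f measurable_on {a..b}"
    by (rule measurable_on_spike_set) (auto intro: negligible_subset[OF nE])
  then show m: "f \<in> borel_measurable (lebesgue_on {a..b})"
    using measurable_on_iff_borel_measurable by (metis box_real(2) lmeasurable_cbox fmeasurableD)
  show "f integrable_on {a..b}"
    by (rule measurable_bounded_by_integrable_imp_integrable[OF m, of "\<lambda>_. B"])
       (use bd in auto)
qed

lemma K_sym: "K x y = K y x"
  by (simp add: K_def mult.commute)

lemma K_bound: "\<bar>K x y\<bar> \<le> 1/2"
proof -
  have "0 \<le> frac u" "frac u < 1" for u :: real by (auto simp: frac_lt_1)
  then show ?thesis by (simp add: K_def abs_if) (smt (verit))
qed

definition Exc :: "real \<Rightarrow> real set" where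
  "Exc y = range (\<lambda>n::int. 1/(of_int n * y))"

lemma Exc_countable: "countable (Exc y)"
  unfolding Exc_def by simp

lemma K_cont_pt:
  assumes "z \<notin> Exc y"
  shows "isCont (\<lambda>z. K z y) z"
proof (cases "y = 0")
  case True
  then show ?thesis by (simp add: K_def)
next
  case False
  have z0: "z \<noteq> 0" using assms by (auto simp: Exc_def image_iff intro: exI[of _ 0])
  have nint: "1/(z*y) \<notin> \<int>"
  proof
    assume "1/(z*y) \<in> \<int>"
    then obtain n where n: "1/(z*y) = of_int n" by (auto elim: Ints_cases)
    then have h: "z * y * of_int n = 1" using z0 False by (simp add: field_simps)
    then have "of_int n \<noteq> (0::real)" by auto
    then have "z = 1/(of_int n * y)" using h False by (simp add: field_simps)
    then show False using assms by (auto simp: Exc_def)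
  qed
  have ev: "eventually (\<lambda>w. K w y = 1/2 - frac (1/(w*y))) (nhds z)"
  proof -
    have "eventually (\<lambda>w. w \<noteq> 0) (nhds z)" using z0 by (rule t1_space_nhds)
    then show ?thesis by eventually_elim (use False in \<open>simp add: K_def\<close>)
  qed
  have "isCont (\<lambda>w. 1/(w*y)) z" using z0 False by (intro continuous_intros) auto
  then have "isCont (\<lambda>w. frac (1/(w*y))) z"
    using continuous_frac[OF nint] by (rule continuous_at_compose[unfolded o_def])
  then have "isCont (\<lambda>w. 1/2 - frac (1/(w*y))) z" by (intro continuous_intros)
  then show ?thesis using isCont_cong[OF ev] by simp
qed

lemma K_cont: "continuous_on (- Exc y) (\<lambda>z. K z y)"
  by (intro continuous_at_imp_continuous_on ballI K_cont_pt) auto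

lemma K_cont': "continuous_on (- Exc x) (\<lambda>z. K x z)"
  using K_cont[of x] by (simp add: K_sym)

lemma int_const_ivl: "a \<le> b \<Longrightarrow> integral {a..b} (\<lambda>_. c::real) = (b - a) * c"
  by simp

lemma W_facts:
  fixes x a :: real
  assumes x: "x > 0" and a: "0 < a" "a \<le> 1"
  defines "q \<equiv> \<lambda>t. t * Pf (1/(x*t))"
  defines "W \<equiv> \<lambda>z. x*a^2*Pf(1/(x*a)) - x*(z^2*Pf(1/(x*z))) + 2*x*integral {a..z} q"
  shows "continuous_on {a..1} W" "W a = 0" "\<And>z. z \<in> {a..1} \<Longrightarrow> \<bar>W z\<bar> \<le> x/2"
    "finite {z \<in> {a..1}. 1/(x*z) \<in> \<int>}"
    "\<And>z. z \<in> {a<..<1} - {z \<in> {a..1}. 1/(x*z) \<in> \<int>} \<Longrightarrow> (W has_real_derivative K x z) (at z)"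
proof -
  have Pc: "continuous_on UNIV Pf" using Pf_cont by (simp add: continuous_at_imp_continuous_on)
  have c1: "continuous_on {a..1} (\<lambda>z. Pf (1/(x*z)))"
    by (rule continuous_on_compose2[OF Pc]) (use x a in \<open>auto intro!: continuous_intros\<close>)
  have qc: "continuous_on {a..1} q" unfolding q_def by (intro continuous_intros c1)
  have qb: "0 \<le> q t \<and> q t \<le> 1/8" if "t \<in> {a..1}" for t
  proof -
    have "0 \<le> t" "t \<le> 1" using that a by auto
    then have "t * Pf (1/(x*t)) \<le> 1 * (1/8)" using Pf_bounds[of "1/(x*t)"]
      by (intro mult_mono) auto
    then show ?thesis unfolding q_def using Pf_bounds[of "1/(x*t)"] \<open>0 \<le> t\<close> by auto
  qed
  have qi: "q integrable_on {a..z}" if "z \<in> {a..1}" for z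
    using integrable_continuous_real[OF continuous_on_subset[OF qc]] that by auto
  have Ib: "0 \<le> integral {a..z} q \<and> integral {a..z} q \<le> (z - a) / 8" if z: "z \<in> {a..1}" for z
  proof
    show "0 \<le> integral {a..z} q" using qb z by (intro integral_nonneg qi) auto
    have "integral {a..z} q \<le> integral {a..z} (\<lambda>_. 1/8)"
      using qb z by (intro integral_le qi) auto
    then show "integral {a..z} q \<le> (z - a) / 8" using z by simp
  qed
  show "continuous_on {a..1} W" unfolding W_def
    by (intro continuous_intros c1 indefinite_integral_continuous_1 qi) (use a in auto)
  show "W a = 0" unfolding W_def by simp
  show "\<bar>W z\<bar> \<le> x/2" if z: "z \<in> {a..1}" for z
  proof -
    have t1: "0 \<le> a^2 * Pf(1/(x*a)) \<and> a^2 * Pf(1/(x*a)) \<le> 1/8"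
    proof -
      have "a^2 \<le> 1" using a by (simp add: power_le_one)
      then have "a^2 * Pf(1/(x*a)) \<le> 1 * (1/8)" using Pf_bounds[of "1/(x*a)"]
        by (intro mult_mono) auto
      then show ?thesis using Pf_bounds[of "1/(x*a)"] by auto
    qed
    have t2: "0 \<le> z^2 * Pf(1/(x*z)) \<and> z^2 * Pf(1/(x*z)) \<le> 1/8"
    proof -
      have "z^2 \<le> 1" using a z by (simp add: power_le_one)
      then have "z^2 * Pf(1/(x*z)) \<le> 1 * (1/8)" using Pf_bounds[of "1/(x*z)"]
        by (intro mult_mono) auto
      then show ?thesis using Pf_bounds[of "1/(x*z)"] by auto
    qed
    have t3: "0 \<le> integral {a..z} q \<and> integral {a..z} q \<le> 1/8" using Ib[OF z] z a by auto
    have "W z = x * (a^2 * Pf(1/(x*a)) - z^2 * Pf(1/(x*z)) + 2 * integral {a..z} q)"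
      unfolding W_def by (simp add: algebra_simps)
    also have "\<bar>\<dots>\<bar> = x * \<bar>a^2 * Pf(1/(x*a)) - z^2 * Pf(1/(x*z)) + 2 * integral {a..z} q\<bar>"
      using x by (simp add: abs_mult)
    also have "\<dots> \<le> x * (1/2)"
    proof (rule mult_left_mono)
      show "\<bar>a^2 * Pf(1/(x*a)) - z^2 * Pf(1/(x*z)) + 2 * integral {a..z} q\<bar> \<le> 1/2"
        unfolding abs_le_iff using t1 t2 t3 by linarith
    qed (use x in auto)
    finally show ?thesis by simp
  qed
  define N where "N = {n::int. 0 \<le> n \<and> n \<le> \<lceil>1/(x*a)\<rceil>}"
  have "{z \<in> {a..1}. 1/(x*z) \<in> \<int>} \<subseteq> (\<lambda>n. 1/(x * of_int n)) ` N"
  proof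
    fix z assume "z \<in> {z \<in> {a..1}. 1/(x*z) \<in> \<int>}"
    then have z: "a \<le> z" "z \<le> 1" "1/(x*z) \<in> \<int>" by auto
    then obtain n where n: "1/(x*z) = of_int n" by (auto elim: Ints_cases)
    have zp: "z > 0" using a z by auto
    have "0 \<le> 1/(x*z)" using zp x by auto
    moreover have "1/(x*z) \<le> 1/(x*a)" using zp x a z by (intro divide_left_mono mult_mono) auto
    ultimately have "n \<in> N" unfolding N_def using n
      by (auto simp del: of_int_le_iff intro: le_ceiling_iff[THEN iffD2])
    moreover have "z = 1/(x * of_int n)" using n zp x
      by (metis divide_divide_eq_right div_by_1 divide_self_if mult.commute nonzero_divide_eq_eq mult_eq_0_iff less_irrefl)
    ultimately show "z \<in> (\<lambda>n. 1/(x * of_int n)) ` N" by blast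
  qed
  moreover have "finite N" unfolding N_def by simp
  ultimately show "finite {z \<in> {a..1}. 1/(x*z) \<in> \<int>}" using finite_subset by blast
  show "(W has_real_derivative K x z) (at z)"
    if z: "z \<in> {a<..<1} - {z \<in> {a..1}. 1/(x*z) \<in> \<int>}" for z
    unfolding W_def
    by (rule W_deriv[OF x a(1) _ _ _ qc]) (use z in \<open>auto simp: q_def\<close>)
qed

lemma Kp_integrable:
  fixes p :: "real \<Rightarrow> real"
  assumes pc: "continuous_on UNIV p" and pb: "\<And>z. z \<in> {a..b} \<Longrightarrow> \<bar>p z\<bar> \<le> M"
  shows "(\<lambda>z. K x z * p z) integrable_on {a..b}"
proof (rule intC(1)[OF Exc_countable[of x]])
  show "continuous_on ({a..b} - Exc x) (\<lambda>z. K x z * p z)"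
    by (intro continuous_intros continuous_on_subset[OF K_cont'] continuous_on_subset[OF pc]) auto
  show "\<bar>K x z * p z\<bar> \<le> 1/2 * M" if "z \<in> {a..b}" for z
    unfolding abs_mult using K_bound[of x z] pb[OF that] by (intro mult_mono) auto
qed

lemma Kp_bound:
  fixes x M :: real and p p' :: "real \<Rightarrow> real"
  assumes x: "0 < x" "x \<le> 1" and pd: "\<And>z. (p has_vector_derivative p' z) (at z)"
    and p'c: "continuous_on {0..1} p'"
    and pb: "\<And>z. z \<in> {0..1} \<Longrightarrow> \<bar>p z\<bar> \<le> M" and p'b: "\<And>z. z \<in> {0..1} \<Longrightarrow> \<bar>p' z\<bar> \<le> M"
  shows "\<bar>integral {0..1} (\<lambda>z. K x z * p z)\<bar> \<le> 2*M*x"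
proof -
  have pc: "continuous_on UNIV p"
    using pd by (intro continuous_at_imp_continuous_on ballI has_vector_derivative_continuous) auto
  have M0: "0 \<le> M" using pb[of 0] by auto
  define q where "q = (\<lambda>t. t * Pf (1/(x*t)))"
  define W where "W = (\<lambda>z. x*x^2*Pf(1/(x*x)) - x*(z^2*Pf(1/(x*z))) + 2*x*integral {x..z} q)"
  have Wapp: "\<And>z. x*x^2*Pf(1/(x*x)) - x*(z^2*Pf(1/(x*z))) + 2*x*integral {x..z} q = W z"
    by (simp add: W_def)
  note WF = W_facts[OF x(1) x(1) x(2), folded q_def, unfolded Wapp, folded W_def]
  define S where "S = {z \<in> {x..1}. 1/(x*z) \<in> \<int>}"
  have Wpc: "continuous_on {x..1} (\<lambda>z. W z * p' z)"
    by (intro continuous_intros WF(1) continuous_on_subset[OF p'c]) (use x in auto)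
  define y where "y = W 1 * p 1 - W x * p x - integral {x..1} (\<lambda>z. W z * p' z)"
  have "((\<lambda>z. K x z * p z) has_integral y) {x..1}"
  proof (rule integration_by_parts_interior_strong[OF bounded_bilinear_mult, of S x 1 W p])
    show "finite S" using WF(4) by (simp add: S_def)
    show "x \<le> 1" by fact
    show "continuous_on {x..1} W" by (rule WF(1))
    show "continuous_on {x..1} p" using pc by (rule continuous_on_subset) auto
    show "(W has_vector_derivative K x z) (at z)" if "z \<in> {x<..<1} - S" for z
      using WF(5)[of z] that by (simp add: S_def has_real_derivative_iff_has_vector_derivative)
    show "(p has_vector_derivative p' z) (at z)" if "z \<in> {x<..<1} - S" for z by (rule pd)
    show "((\<lambda>z. W z * p' z) has_integral W 1 * p 1 - W x * p x - y) {x..1}"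
      unfolding y_def using integrable_continuous_real[OF Wpc] by (simp add: has_integral_integral)
  qed
  then have I2: "integral {x..1} (\<lambda>z. K x z * p z) = y" by (rule integral_unique)
  have b1: "\<bar>integral {x..1} (\<lambda>z. W z * p' z)\<bar> \<le> (1 - x) * (x/2 * M)"
  proof -
    have "norm (integral {x..1} (\<lambda>z. W z * p' z)) \<le> integral {x..1} (\<lambda>_. x/2 * M)"
    proof (rule integral_norm_bound_integral)
      show "(\<lambda>z. W z * p' z) integrable_on {x..1}" using integrable_continuous_real[OF Wpc] .
      show "norm (W z * p' z) \<le> x/2 * M" if "z \<in> {x..1}" for z
      proof -
        have "\<bar>p' z\<bar> \<le> M" using p'b that x by auto
        then show ?thesis
          using WF(3)[OF that] unfolding real_norm_def abs_mult by (intro mult_mono) auto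
      qed
    qed auto
    then show ?thesis using x by (simp add: mult_ac)
  qed
  have b2: "\<bar>W 1 * p 1\<bar> \<le> x/2 * M"
    unfolding abs_mult using WF(3)[of 1] pb[of 1] x by (intro mult_mono) auto
  have b3: "\<bar>y\<bar> \<le> x * M"
  proof -
    have "\<bar>y\<bar> \<le> x/2 * M + (1 - x) * (x/2 * M)" unfolding y_def using WF(2) b1 b2 by simp
    also have "\<dots> \<le> x * M"
    proof -
      have "0 \<le> M * (x * x)" using M0 by simp
      then show ?thesis by (simp add: field_simps)
    qed
    finally show ?thesis .
  qed
  have b4: "\<bar>integral {0..x} (\<lambda>z. K x z * p z)\<bar> \<le> x * (1/2 * M)"
  proof -
    have "norm (integral {0..x} (\<lambda>z. K x z * p z)) \<le> integral {0..x} (\<lambda>_. 1/2 * M)"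
    proof (rule integral_norm_bound_integral)
      show "(\<lambda>z. K x z * p z) integrable_on {0..x}" using Kp_integrable[OF pc, of 0 x M] pb x by auto
      show "norm (K x z * p z) \<le> 1/2 * M" if "z \<in> {0..x}" for z
      proof -
        have "\<bar>p z\<bar> \<le> M" using pb that x by auto
        then show ?thesis
          using K_bound[of x z] unfolding real_norm_def abs_mult by (intro mult_mono) auto
      qed
    qed auto
    then show ?thesis using x by simp
  qed
  have "integral {0..x} (\<lambda>z. K x z * p z) + integral {x..1} (\<lambda>z. K x z * p z)
        = integral {0..1} (\<lambda>z. K x z * p z)"
    using Henstock_Kurzweil_Integration.integral_combine[where a=0 and c=x and b=1 and f="\<lambda>z. K x z * p z"] Kp_integrable[OF pc pb, where x=x] x by auto
  then have "\<bar>integral {0..1} (\<lambda>z. K x z * p z)\<bar> \<le> x * (1/2 * M) + x * M"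
    using b3 b4 I2 by linarith
  also have "\<dots> \<le> 2*M*x" using x M0 by (simp add: algebra_simps)
  finally show ?thesis .
qed

lemma bdd_meas_int:
  fixes f :: "real \<Rightarrow> real"
  assumes "f \<in> borel_measurable (lebesgue_on {a..b})" "\<And>z. z \<in> {a..b} \<Longrightarrow> \<bar>f z\<bar> \<le> C"
  shows "f integrable_on {a..b}"
  by (rule measurable_bounded_by_integrable_imp_integrable[OF assms(1), of "\<lambda>_. C"]) (use assms in auto)

lemma cont_meas:
  fixes f :: "real \<Rightarrow> real"
  assumes "continuous_on UNIV f"
  shows "f \<in> borel_measurable (lebesgue_on {a..b})"
  by (rule continuous_imp_measurable_on_sets_lebesgue) (auto intro: continuous_on_subset[OF assms])

lemma Kx_meas: "(\<lambda>z. K x z) \<in> borel_measurable (lebesgue_on {a..b})"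
proof (rule intC(2)[OF Exc_countable[of x], where B="1/2"])
  show "continuous_on ({a..b} - Exc x) (K x)"
    using continuous_on_subset[OF K_cont'[of x]] by auto
qed (rule K_bound)

lemma poly_approx:
  fixes g :: "real \<Rightarrow> real"
  assumes gm: "g \<in> borel_measurable (lebesgue_on {0..1})" and gb: "\<And>z. z \<in> {0..1} \<Longrightarrow> \<bar>g z\<bar> \<le> B"
    and e: "e > 0"
  shows "\<exists>p. polynomial_function p \<and> integral {0..1} (\<lambda>z. \<bar>p z - g z\<bar>) < e"
proof -
  have B0: "0 \<le> B" using gb[of 0] by auto
  have "g measurable_on {0..1}"
    using gm measurable_on_iff_borel_measurable by (metis box_real(2) lmeasurable_cbox fmeasurableD)
  then obtain N F where N: "negligible N" and Fc: "\<And>n. continuous_on UNIV (F n)"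
    and Ft: "\<And>z. z \<notin> N \<Longrightarrow> (\<lambda>n. F n z) \<longlonglongrightarrow> (if z \<in> {0..1} then g z else 0)"
    unfolding measurable_on_def by blast
  define G where "G = (\<lambda>n z. max (-B) (min B (F n z)))"
  have Gc: "continuous_on UNIV (G n)" for n unfolding G_def by (intro continuous_intros Fc)
  have "\<forall>n. \<exists>p. polynomial_function p \<and> (\<forall>z\<in>{0..1}. norm (G n z - p z) < inverse (real (Suc n)))"
    using Stone_Weierstrass_polynomial_function[OF compact_Icc continuous_on_subset[OF Gc]] by auto
  then obtain P where Pp: "\<And>n. polynomial_function (P n)"
    and PG: "\<And>n z. z \<in> {0..1} \<Longrightarrow> \<bar>G n z - P n z\<bar> < inverse (real (Suc n))"
    by (metis real_norm_def)
  have Pc: "continuous_on UNIV (P n)" for n using Pp by (rule continuous_on_polymonial_function)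
  have Pb: "\<bar>P n z\<bar> \<le> B + 1" if "z \<in> {0..1}" for n z
  proof -
    have "\<bar>G n z\<bar> \<le> B" unfolding G_def using B0 by auto
    moreover have "inverse (real (Suc n)) \<le> 1" by (simp add: inverse_le_1_iff)
    ultimately show ?thesis using PG[OF that, of n] by linarith
  qed
  define f where "f = (\<lambda>n z. \<bar>P n z - g z\<bar>)"
  have fi: "f n integrable_on {0..1}" for n
    unfolding f_def
  proof (rule bdd_meas_int[where C="2*B+1"])
    show "(\<lambda>z. \<bar>P n z - g z\<bar>) \<in> borel_measurable (lebesgue_on {0..1})"
      by (intro borel_measurable_abs borel_measurable_diff gm cont_meas[OF Pc])
    show "\<bar>\<bar>P n z - g z\<bar>\<bar> \<le> 2*B+1" if "z \<in> {0..1}" for z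
      using Pb[OF that, of n] gb[OF that] by linarith
  qed
  define S where "S = {0..1} - N"
  have negS: "negligible ({0..1} - S)" "negligible (S - {0..1})"
    by (rule negligible_subset[OF N], force simp: S_def) (simp add: S_def)
  have fiS: "f n integrable_on S" for n
  proof (rule integrable_spike_set[OF fi[of n]])
    show "negligible {z \<in> S - {0..1}. f n z \<noteq> 0}" by (rule negligible_subset[OF negS(2)]) auto
    show "negligible {z \<in> {0..1} - S. f n z \<noteq> 0}" by (rule negligible_subset[OF negS(1)]) auto
  qed
  have conv: "(\<lambda>n. f n z) \<longlonglongrightarrow> 0" if z: "z \<in> S" for z
  proof -
    have zN: "z \<notin> N" "z \<in> {0..1}" using z by (auto simp: S_def)
    have "(\<lambda>n. F n z) \<longlonglongrightarrow> g z" using Ft[OF zN(1)] zN(2) by simp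
    then have "(\<lambda>n. G n z) \<longlonglongrightarrow> max (-B) (min B (g z))" unfolding G_def
      by (intro tendsto_intros)
    also have "max (-B) (min B (g z)) = g z" using gb[OF zN(2)] by auto
    finally have Gt: "(\<lambda>n. G n z) \<longlonglongrightarrow> g z" .
    have "(\<lambda>n. P n z - G n z) \<longlonglongrightarrow> 0"
      by (rule Lim_null_comparison[OF _ LIMSEQ_inverse_real_of_nat])
         (use PG[OF zN(2)] in \<open>auto intro!: always_eventually simp: abs_minus_commute less_imp_le\<close>)
    from tendsto_add[OF this Gt] have "(\<lambda>n. P n z) \<longlonglongrightarrow> g z" by simp
    then have "(\<lambda>n. P n z - g z) \<longlonglongrightarrow> 0" by (simp add: LIM_zero)
    then show ?thesis unfolding f_def by (rule tendsto_rabs_zero)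
  qed
  have "(\<lambda>n. integral S (f n)) \<longlonglongrightarrow> integral S (\<lambda>_. 0::real)"
  proof (rule dominated_convergence(2)[OF fiS, where h="\<lambda>_. 2*B+1"])
    show "(\<lambda>_. 2*B+1) integrable_on S"
    proof (rule integrable_spike_set[OF integrable_const_ivl])
      show "negligible {z \<in> {0..1} - S. 2*B+1 \<noteq> 0}" by (rule negligible_subset[OF negS(1)]) auto
      show "negligible {z \<in> S - {0..1}. 2*B+1 \<noteq> 0}" by (rule negligible_subset[OF negS(2)]) auto
    qed
    show "norm (f n z) \<le> 2*B+1" if "z \<in> S" for n z
      using Pb[of z n] gb[of z] that by (auto simp: S_def f_def)
    show "(\<lambda>n. f n z) \<longlonglongrightarrow> 0" if "z \<in> S" for z using conv that .
  qed
  moreover have "integral S (f n) = integral {0..1} (f n)" for n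
  proof (rule integral_spike_set)
    show "negligible {z \<in> S - {0..1}. f n z \<noteq> 0}" by (rule negligible_subset[OF negS(2)]) auto
    show "negligible {z \<in> {0..1} - S. f n z \<noteq> 0}" by (rule negligible_subset[OF negS(1)]) auto
  qed
  ultimately have "(\<lambda>n. integral {0..1} (f n)) \<longlonglongrightarrow> 0" by simp
  from order_tendstoD(2)[OF this e] obtain n where "integral {0..1} (f n) < e"
    unfolding eventually_sequentially by blast
  then show ?thesis using Pp[of n] unfolding f_def by blast
qed

lemma Z_gen:
  fixes g :: "real \<Rightarrow> real"
  assumes gm: "g \<in> borel_measurable (lebesgue_on {0..1})" and gb: "\<And>z. z \<in> {0..1} \<Longrightarrow> \<bar>g z\<bar> \<le> B"
    and e: "e > 0"
  shows "\<exists>d>0. \<forall>x. 0 < x \<longrightarrow> x < d \<longrightarrow> x \<le> 1 \<longrightarrow> \<bar>integral {0..1} (\<lambda>z. K x z * g z)\<bar> < e"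
proof -
  obtain p where pp: "polynomial_function p" and pg: "integral {0..1} (\<lambda>z. \<bar>p z - g z\<bar>) < e/2"
    using poly_approx[OF gm gb, of "e/2"] e by auto
  obtain p' where pp': "polynomial_function p'" and pd: "\<And>z. (p has_vector_derivative p' z) (at z)"
    using has_vector_derivative_polynomial_function[OF pp] by blast
  have pc: "continuous_on UNIV p" and p'c: "continuous_on UNIV p'"
    using pp pp' by (auto intro: continuous_on_polymonial_function)
  obtain M1 where M1: "M1 > 0" "\<And>z. z \<in> {0..1} \<Longrightarrow> \<bar>p z\<bar> \<le> M1"
    using compact_imp_bounded[OF compact_continuous_image[OF continuous_on_subset[OF pc] compact_Icc[of 0 1]]]
    unfolding bounded_pos by (auto simp: real_norm_def)
  obtain M2 where M2: "M2 > 0" "\<And>z. z \<in> {0..1} \<Longrightarrow> \<bar>p' z\<bar> \<le> M2"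
    using compact_imp_bounded[OF compact_continuous_image[OF continuous_on_subset[OF p'c] compact_Icc[of 0 1]]]
    unfolding bounded_pos by (auto simp: real_norm_def)
  define M where "M = max M1 M2"
  have M: "M > 0" "\<And>z. z \<in> {0..1} \<Longrightarrow> \<bar>p z\<bar> \<le> M" "\<And>z. z \<in> {0..1} \<Longrightarrow> \<bar>p' z\<bar> \<le> M"
    using M1 M2 unfolding M_def by (auto intro: max.coboundedI1 max.coboundedI2)
  have B0: "0 \<le> B" using gb[of 0] by auto
  show ?thesis
  proof (intro exI[of _ "e/(4*M)"] conjI allI impI)
    show "e/(4*M) > 0" using e M by simp
    fix x :: real assume x: "0 < x" "x < e/(4*M)" "x \<le> 1"
    have I1: "\<bar>integral {0..1} (\<lambda>z. K x z * p z)\<bar> \<le> 2*M*x"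
      by (rule Kp_bound[OF x(1) x(3) pd continuous_on_subset[OF p'c] M(2) M(3)]) auto
    have "2*M*x < 2*M*(e/(4*M))" using x(2) M(1) by (intro mult_strict_left_mono) auto
    also have "\<dots> = e/2" using M by simp
    finally have I1': "\<bar>integral {0..1} (\<lambda>z. K x z * p z)\<bar> < e/2" using I1 by linarith
    have ig: "(\<lambda>z. K x z * g z) integrable_on {0..1}"
    proof (rule bdd_meas_int[where C="1/2*B"])
      show "(\<lambda>z. K x z * g z) \<in> borel_measurable (lebesgue_on {0..1})"
        by (intro borel_measurable_times Kx_meas gm)
      show "\<bar>K x z * g z\<bar> \<le> 1/2*B" if "z \<in> {0..1}" for z
        unfolding abs_mult using K_bound[of x z] gb[OF that] by (intro mult_mono) auto
    qed
    have ip: "(\<lambda>z. K x z * p z) integrable_on {0..1}"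
      by (rule Kp_integrable[OF pc M(2)])
    have ia: "(\<lambda>z. 1/2 * \<bar>p z - g z\<bar>) integrable_on {0..1}"
    proof (rule bdd_meas_int[where C="1/2*(M+B)"])
      show "(\<lambda>z. 1/2 * \<bar>p z - g z\<bar>) \<in> borel_measurable (lebesgue_on {0..1})"
        by (intro borel_measurable_times borel_measurable_const borel_measurable_abs
            borel_measurable_diff gm cont_meas[OF pc])
      show "\<bar>1/2 * \<bar>p z - g z\<bar>\<bar> \<le> 1/2*(M+B)" if "z \<in> {0..1}" for z
        using M(2)[OF that] gb[OF that] by (simp add: abs_le_iff)
    qed
    have "norm (integral {0..1} (\<lambda>z. K x z * g z - K x z * p z)) \<le> integral {0..1} (\<lambda>z. 1/2 * \<bar>p z - g z\<bar>)"
    proof (rule Henstock_Kurzweil_Integration.integral_norm_bound_integral)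
      show "(\<lambda>z. K x z * g z - K x z * p z) integrable_on {0..1}" by (rule integrable_diff[OF ig ip])
      show "(\<lambda>z. 1/2 * \<bar>p z - g z\<bar>) integrable_on {0..1}" by (rule ia)
      show "norm (K x z * g z - K x z * p z) \<le> 1/2 * \<bar>p z - g z\<bar>" if "z \<in> {0..1}" for z
      proof -
        have "\<bar>K x z * g z - K x z * p z\<bar> = \<bar>K x z\<bar> * \<bar>p z - g z\<bar>"
          by (simp add: abs_mult[symmetric] algebra_simps abs_minus_commute)
        also have "\<dots> \<le> 1/2 * \<bar>p z - g z\<bar>" using K_bound[of x z] by (intro mult_right_mono) auto
        finally show ?thesis by simp
      qed
    qed
    also have "\<dots> = 1/2 * integral {0..1} (\<lambda>z. \<bar>p z - g z\<bar>)" by simp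
    also have "\<dots> < e/4" using pg by simp
    finally have I2: "\<bar>integral {0..1} (\<lambda>z. K x z * g z - K x z * p z)\<bar> < e/4"
      by (simp only: real_norm_def)
    have "integral {0..1} (\<lambda>z. K x z * g z - K x z * p z)
          = integral {0..1} (\<lambda>z. K x z * g z) - integral {0..1} (\<lambda>z. K x z * p z)"
      by (rule Henstock_Kurzweil_Integration.integral_diff[OF ig ip])
    then show "\<bar>integral {0..1} (\<lambda>z. K x z * g z)\<bar> < e" using I1' I2 e by linarith
  qed
qed

lemma Exc_swap:
  assumes y0: "y0 \<noteq> 0" and z: "z \<notin> Exc y0"
  shows "y0 \<notin> Exc z"
proof
  assume "y0 \<in> Exc z"
  then obtain n :: int where n: "y0 = 1/(of_int n * z)" by (auto simp: Exc_def)
  then have h: "y0 * (of_int n * z) = 1" using y0 by (auto simp: field_simps split: if_splits)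
  then have "of_int n \<noteq> (0::real)" by auto
  then have "z = 1/(of_int n * y0)" using h y0 by (simp add: field_simps)
  then show False using z by (auto simp: Exc_def)
qed

lemma KK_int: "(\<lambda>z. K x z * K y z) integrable_on {0..1}"
proof (rule bdd_meas_int[where C="1/2*(1/2)"])
  show "(\<lambda>z. K x z * K y z) \<in> borel_measurable (lebesgue_on {0..1})"
    by (intro borel_measurable_times Kx_meas)
  show "\<bar>K x z * K y z\<bar> \<le> 1/2*(1/2)" for z
    unfolding abs_mult using K_bound[of x z] K_bound[of y z] by (intro mult_mono) auto
qed

lemma Kd_int: "(\<lambda>z. \<bar>K y z - K y' z\<bar>) integrable_on {0..1}"
proof (rule bdd_meas_int[where C="1"])
  show "(\<lambda>z. \<bar>K y z - K y' z\<bar>) \<in> borel_measurable (lebesgue_on {0..1})"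
    by (intro borel_measurable_abs borel_measurable_diff Kx_meas)
  show "\<bar>\<bar>K y z - K y' z\<bar>\<bar> \<le> 1" for z
    using K_bound[of y z] K_bound[of y' z] by (simp add: abs_le_iff) linarith
qed

lemma K2_alt: "K2 x y = integral {0..1} (\<lambda>z. K x z * K y z)"
  unfolding K2_def by (simp add: K_sym[of _ y])

lemma K2_sym: "K2 x y = K2 y x"
  unfolding K2_alt by (simp add: mult.commute)

lemma K2_zero: "K2 0 y = 0"
  unfolding K2_def by (simp add: K_def)

lemma K2_diff: "\<bar>K2 x y - K2 x y'\<bar> \<le> 1/2 * integral {0..1} (\<lambda>z. \<bar>K y z - K y' z\<bar>)"
proof -
  have "K2 x y - K2 x y' = integral {0..1} (\<lambda>z. K x z * K y z - K x z * K y' z)"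
    unfolding K2_alt by (rule Henstock_Kurzweil_Integration.integral_diff[OF KK_int KK_int, symmetric])
  also have "norm \<dots> \<le> integral {0..1} (\<lambda>z. 1/2 * \<bar>K y z - K y' z\<bar>)"
  proof (rule Henstock_Kurzweil_Integration.integral_norm_bound_integral)
    show "(\<lambda>z. K x z * K y z - K x z * K y' z) integrable_on {0..1}"
      by (rule integrable_diff[OF KK_int KK_int])
    show "(\<lambda>z. 1/2 * \<bar>K y z - K y' z\<bar>) integrable_on {0..1}"
      using integrable_on_cmult_left[OF Kd_int, of "1/2"] by simp
    show "norm (K x z * K y z - K x z * K y' z) \<le> 1/2 * \<bar>K y z - K y' z\<bar>" for z
    proof -
      have "\<bar>K x z * K y z - K x z * K y' z\<bar> = \<bar>K x z\<bar> * \<bar>K y z - K y' z\<bar>"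
        by (simp add: abs_mult[symmetric] algebra_simps)
      also have "\<dots> \<le> 1/2 * \<bar>K y z - K y' z\<bar>" using K_bound[of x z] by (intro mult_right_mono) auto
      finally show ?thesis by simp
    qed
  qed
  also have "\<dots> = 1/2 * integral {0..1} (\<lambda>z. \<bar>K y z - K y' z\<bar>)" by simp
  finally show ?thesis by simp
qed

lemma L1_cont:
  assumes y0: "y0 \<noteq> 0"
  shows "isCont (\<lambda>y. integral {0..1} (\<lambda>z. \<bar>K y z - K y0 z\<bar>)) y0"
proof (rule continuous_at_sequentiallyI)
  fix ys :: "nat \<Rightarrow> real" assume ys: "ys \<longlonglongrightarrow> y0"
  define S where "S = {0..1} - Exc y0"
  have nE: "negligible (Exc y0)" by (rule countable_negligible[OF Exc_countable])
  have eqS: "integral S f = integral {0..1} f" for f :: "real \<Rightarrow> real"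
  proof (rule integral_spike_set)
    show "negligible {z \<in> S - {0..1}. f z \<noteq> 0}" by (rule negligible_subset[of "{}"]) (auto simp: S_def)
    show "negligible {z \<in> {0..1} - S. f z \<noteq> 0}" by (rule negligible_subset[OF nE]) (auto simp: S_def)
  qed
  have intS: "f integrable_on S" if "f integrable_on {0..1}" for f :: "real \<Rightarrow> real"
  proof (rule integrable_spike_set[OF that])
    show "negligible {z \<in> {0..1} - S. f z \<noteq> 0}" by (rule negligible_subset[OF nE]) (auto simp: S_def)
    show "negligible {z \<in> S - {0..1}. f z \<noteq> 0}" by (rule negligible_subset[of "{}"]) (auto simp: S_def)
  qed
  have "(\<lambda>n. integral S (\<lambda>z. \<bar>K (ys n) z - K y0 z\<bar>)) \<longlonglongrightarrow> integral S (\<lambda>_. 0::real)"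
  proof (rule dominated_convergence(2)[where h="\<lambda>_. 1"])
    show "(\<lambda>z. \<bar>K (ys n) z - K y0 z\<bar>) integrable_on S" for n by (rule intS[OF Kd_int])
    show "(\<lambda>_. 1::real) integrable_on S" by (rule intS[OF integrable_const_ivl])
    show "norm \<bar>K (ys n) z - K y0 z\<bar> \<le> 1" for n z
      using K_bound[of "ys n" z] K_bound[of y0 z] by (simp add: abs_le_iff) linarith
    show "(\<lambda>n. \<bar>K (ys n) z - K y0 z\<bar>) \<longlonglongrightarrow> 0" if z: "z \<in> S" for z
    proof -
      have "y0 \<notin> Exc z" using Exc_swap[OF y0] z by (auto simp: S_def)
      then have "isCont (\<lambda>w. K w z) y0" by (rule K_cont_pt)
      from isCont_tendsto_compose[OF this ys] have "(\<lambda>n. K (ys n) z) \<longlonglongrightarrow> K y0 z" .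
      then have "(\<lambda>n. K (ys n) z - K y0 z) \<longlonglongrightarrow> 0" by (simp add: LIM_zero)
      then show ?thesis by (rule tendsto_rabs_zero)
    qed
  qed
  then show "(\<lambda>n. integral {0..1} (\<lambda>z. \<bar>K (ys n) z - K y0 z\<bar>)) \<longlonglongrightarrow>
      integral {0..1} (\<lambda>z. \<bar>K y0 z - K y0 z\<bar>)"
    by (simp add: eqS)
qed

lemma Z_K2:
  assumes e: "e > 0"
  shows "\<exists>d>0. \<forall>x. 0 < x \<longrightarrow> x < d \<longrightarrow> x \<le> 1 \<longrightarrow> \<bar>K2 x y0\<bar> < e"
  using Z_gen[OF Kx_meas[of y0] K_bound e] unfolding K2_alt by auto

lemma core:
  fixes X Y :: "'a \<Rightarrow> real"
  assumes y0: "y0 \<noteq> 0" and x0: "x0 \<in> {0..1}"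
    and Xt: "(X \<longlongrightarrow> x0) F" and Xin: "eventually (\<lambda>t. X t \<in> {0..1}) F"
    and Yt: "(Y \<longlongrightarrow> y0) F"
  shows "((\<lambda>t. K2 (X t) (Y t)) \<longlongrightarrow> K2 x0 y0) F"
proof -
  define \<Phi> where "\<Phi> = (\<lambda>y0 y. integral {0..1} (\<lambda>z. \<bar>K y z - K y0 z\<bar>))"
  have \<Phi>0: "\<Phi> y0 y0 = 0" for y0 by (simp add: \<Phi>_def)
  have \<Phi>t: "((\<lambda>t. \<Phi> c (W t)) \<longlongrightarrow> 0) F" if "c \<noteq> 0" "(W \<longlongrightarrow> c) F" for c and W :: "'a \<Rightarrow> real"
    using isCont_tendsto_compose[OF L1_cont[OF that(1)] that(2)] by (simp add: \<Phi>_def)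
  have a: "((\<lambda>t. K2 (X t) (Y t) - K2 (X t) y0) \<longlongrightarrow> 0) F"
  proof (rule Lim_null_comparison)
    show "((\<lambda>t. 1/2 * \<Phi> y0 (Y t)) \<longlongrightarrow> 0) F"
      using tendsto_mult_right_zero[OF \<Phi>t[OF y0 Yt], of "1/2"] by simp
    show "\<forall>\<^sub>F t in F. norm (K2 (X t) (Y t) - K2 (X t) y0) \<le> 1/2 * \<Phi> y0 (Y t)"
      unfolding \<Phi>_def real_norm_def by (intro always_eventually allI K2_diff)
  qed
  have b: "((\<lambda>t. K2 (X t) y0) \<longlongrightarrow> K2 x0 y0) F"
  proof (cases "x0 = 0")
    case False
    have "((\<lambda>t. K2 (X t) y0 - K2 x0 y0) \<longlongrightarrow> 0) F"
    proof (rule Lim_null_comparison)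
      show "((\<lambda>t. 1/2 * \<Phi> x0 (X t)) \<longlongrightarrow> 0) F"
        using tendsto_mult_right_zero[OF \<Phi>t[OF False Xt], of "1/2"] by simp
      show "\<forall>\<^sub>F t in F. norm (K2 (X t) y0 - K2 x0 y0) \<le> 1/2 * \<Phi> x0 (X t)"
        unfolding \<Phi>_def real_norm_def K2_sym[of _ y0] by (intro always_eventually allI K2_diff)
    qed
    then show ?thesis by (simp add: LIM_zero_iff)
  next
    case True
    show ?thesis unfolding True K2_zero
    proof (rule tendstoI)
      fix e :: real assume e: "e > 0"
      obtain d where d: "d > 0" "\<And>x. 0 < x \<Longrightarrow> x < d \<Longrightarrow> x \<le> 1 \<Longrightarrow> \<bar>K2 x y0\<bar> < e"
        using Z_K2[OF e, of y0] by blast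
      have "eventually (\<lambda>t. dist (X t) 0 < d) F" using tendstoD[OF Xt[unfolded True] d(1)] .
      with Xin show "eventually (\<lambda>t. dist (K2 (X t) y0) 0 < e) F"
      proof eventually_elim
        case (elim t)
        show ?case
        proof (cases "X t = 0")
          case True then show ?thesis using e by (simp add: K2_zero)
        next
          case False
          then show ?thesis using elim d(2)[of "X t"] by (auto simp: dist_real_def)
        qed
      qed
    qed
  qed
  from tendsto_add[OF a b] show ?thesis by simp
qed

theorem theorem2p7:
  shows "continuous_on (({0..1} \<times> {0..1}) - {(0, 0)}) (\<lambda>(x::real, y::real). K2 x y)"
  unfolding continuous_on_def
proof
  fix p assume p: "p \<in> ({0..1} \<times> {0..1}) - {(0::real, 0::real)}"
  define D where "D = ({0..1} \<times> {0..1}) - {(0::real, 0::real)}"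
  obtain x0 y0 where p_eq: "p = (x0, y0)" by (cases p)
  have inD: "eventually (\<lambda>t. t \<in> D) (at p within D)"
    unfolding eventually_at_filter by simp
  have fstin: "eventually (\<lambda>t. fst t \<in> {0..1}) (at p within D)"
    using inD by eventually_elim (auto simp: D_def)
  have sndin: "eventually (\<lambda>t. snd t \<in> {0..1}) (at p within D)"
    using inD by eventually_elim (auto simp: D_def)
  have ft: "(fst \<longlongrightarrow> x0) (at p within D)" and st: "(snd \<longlongrightarrow> y0) (at p within D)"
    using tendsto_fst[OF tendsto_ident_at[of p D]] tendsto_snd[OF tendsto_ident_at[of p D]]
    by (auto simp: p_eq)
  have xy: "x0 \<in> {0..1}" "y0 \<in> {0..1}" "(x0, y0) \<noteq> (0, 0)" using p by (auto simp: p_eq)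
  show "((\<lambda>(x, y). K2 x y) \<longlongrightarrow> (\<lambda>(x, y). K2 x y) p) (at p within D)"
  proof (cases "y0 = 0")
    case False
    from core[OF False xy(1) ft fstin st] show ?thesis
      by (simp add: p_eq case_prod_beta')
  next
    case True
    then have "x0 \<noteq> 0" using xy by auto
    from core[OF this xy(2) st sndin ft] show ?thesis
      by (simp add: p_eq case_prod_beta' K2_sym[of "snd _"] K2_sym[of y0])
  qed
qed

end
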